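(* Consider $x(t+1)=Ax(t)+Bu(t)$, $y(t)=Cx(t)+e(t)+d(t)$ with $\|d(t)\|_\infty\le d_{\max}$ for all $t$, where there is a fixed set of at most $s$ sensors outside of which $e_i(t)=0$ for all $t$. Assume that $\mathcal{O}_\Gamma$ has full column rank for every $\Gamma\in\mathbb{C}_p^{p-s}$ (window length $l$ with $l+1\ge n$). Let $H\in\mathbb{R}^{r\times n}$, $q\in\mathbb{R}^r$, $\mathcal{C}=\{x:Hx+q\ge0\}$, $0<\gamma<1$, and let $u_{\mathrm{nom}}$ be any nominal input signal. For each $t\ge l$ let $u(t)=u_{\mathrm{safe}}(t)$ be the solution of the quadratic program $$u_{\mathrm{safe}}(t)=\arg\min_u\|u-u_{\mathrm{nom}}(t)\|^2\ \ \text{s.t.}\ \ HBu+H(A-(1-\gamma)I)x_d^{t,\Gamma}+\gamma q-\Delta_\Gamma\mathbf{1}\ge0\ \ \text{for all }\Gamma\in\mathbb{C}_p^{p-s}\text{ with }\underline d^\Gamma\le d_{\max},$$ and suppose this program is feasible for every $t\ge l$. If $x(l)\in\mathcal{C}$, then $x(t)\in\mathcal{C}$ for all $t\ge l$.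
   Context: $C_i$ is the $i$-th row of $C$; $\mathbb{C}_p^{p-s}$ is the collection of subsets of $\{1,\dots,p\}$ of size $p-s$. At time $t$, using the data $u(t-l),\dots,u(t-1)$, $y(t-l),\dots,y(t)$: $\mathcal{O}_i=(C_i;C_iA;\dots;C_iA^l)$, $\widetilde Y_i=(y_i(t-l),\dots,y_i(t))^\top$, $U=(u(t-l);\dots;u(t-1);0)$, $F_i$ the block lower-triangular matrix with $(j,k)$ block $C_iA^{j-k-1}B$ for $j>k$ and $0$ otherwise, $Y_i=\widetilde Y_i-F_iU$; $\mathcal{O}_\Gamma,Y_\Gamma$ are the vertical stacks over $i\in\Gamma$. $(x_d^{t-l,\Gamma},\underline d^\Gamma)$ is a minimizer of $\min_{x,\delta}\delta$ s.t. $-\delta\mathbf{1}\le\mathcal{O}_\Gamma x-Y_\Gamma\le\delta\mathbf{1}$; $d_e^\Gamma=d_{\max}+\underline d^\Gamma$; $x_d^{t,\Gamma}=A^lx_d^{t-l,\Gamma}+\sum_{k=1}^lA^{k-1}Bu(t-k)$; $m(\mathcal{O}_\Gamma)=\inf_{\|a\|_\infty=1}\|\mathcal{O}_\Gamma a\|_\infty$; $\Delta_\Gamma=\|H(A-(1-\gamma)I)\|_\infty\|A\|_\infty^l d_e^\Gamma/m(\mathcal{O}_\Gamma)$, with matrix $\infty$-norms the induced operator norms. Inequalities are componentwise. *)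

theory Defs
  imports "HOL-Analysis.Analysis"
begin

text \<open>Matrix power (note: the power operator on vec is componentwise, so we define
  the matrix power explicitly via matrix multiplication).\<close>
primrec mpow :: "real^'n^'n \<Rightarrow> nat \<Rightarrow> real^'n^'n" where
  "mpow A 0 = mat 1"
| "mpow A (Suc k) = A ** mpow A k"

definition mat_infnorm :: "real^'a^'b \<Rightarrow> real" where
  "mat_infnorm M = Sup {infnorm (M *v x) | x. infnorm x = 1}"

text \<open>Entry (i,j) of the stacked observability matrix applied to a:
  i-th sensor, j-th time step: C_i A^j a.\<close>
definition obs_entry :: "real^'n^'p \<Rightarrow> real^'n^'n \<Rightarrow> 'p \<Rightarrow> nat \<Rightarrow> real^'n \<Rightarrow> real" where
  "obs_entry C A i j a = row i C \<bullet> (mpow A j *v a)"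

definition obs_full_rank :: "real^'n^'p \<Rightarrow> real^'n^'n \<Rightarrow> nat \<Rightarrow> 'p set \<Rightarrow> bool" where
  "obs_full_rank C A l \<Gamma> \<longleftrightarrow>
     (\<forall>a. (\<forall>i\<in>\<Gamma>. \<forall>j\<le>l. obs_entry C A i j a = 0) \<longrightarrow> a = 0)"

definition obs_infnorm :: "real^'n^'p \<Rightarrow> real^'n^'n \<Rightarrow> nat \<Rightarrow> 'p set \<Rightarrow> real^'n \<Rightarrow> real" where
  "obs_infnorm C A l \<Gamma> a = Max {\<bar>obs_entry C A i j a\<bar> | i j. i \<in> \<Gamma> \<and> j \<le> l}"

definition obs_m :: "real^'n^'p \<Rightarrow> real^'n^'n \<Rightarrow> nat \<Rightarrow> 'p set \<Rightarrow> real" where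
  "obs_m C A l \<Gamma> = Inf {obs_infnorm C A l \<Gamma> a | a. infnorm a = 1}"

text \<open>Entry j (j = 0..l) of Y_i = Ytilde_i - F_i U at time t, written out:
  y_i(t-l+j) - sum_{k<j} C_i A^(j-k-1) B u(t-l+k).\<close>
definition Yval :: "real^'n^'p \<Rightarrow> real^'n^'n \<Rightarrow> real^'m^'n \<Rightarrow> nat \<Rightarrow>
    (nat \<Rightarrow> real^'p) \<Rightarrow> (nat \<Rightarrow> real^'m) \<Rightarrow> nat \<Rightarrow> 'p \<Rightarrow> nat \<Rightarrow> real" where
  "Yval C A B l y u t i j =
     y (t - l + j) $ i - (\<Sum>k<j. row i C \<bullet> (mpow A (j - k - 1) *v (B *v u (t - l + k))))"

definition lp_feasible :: "real^'n^'p \<Rightarrow> real^'n^'n \<Rightarrow> real^'m^'n \<Rightarrow> nat \<Rightarrow>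
    (nat \<Rightarrow> real^'p) \<Rightarrow> (nat \<Rightarrow> real^'m) \<Rightarrow> nat \<Rightarrow> 'p set \<Rightarrow> real^'n \<Rightarrow> real \<Rightarrow> bool" where
  "lp_feasible C A B l y u t \<Gamma> x \<delta> \<longleftrightarrow>
     (\<forall>i\<in>\<Gamma>. \<forall>j\<le>l. - \<delta> \<le> obs_entry C A i j x - Yval C A B l y u t i j
                    \<and> obs_entry C A i j x - Yval C A B l y u t i j \<le> \<delta>)"

definition lp_minimizer :: "real^'n^'p \<Rightarrow> real^'n^'n \<Rightarrow> real^'m^'n \<Rightarrow> nat \<Rightarrow>
    (nat \<Rightarrow> real^'p) \<Rightarrow> (nat \<Rightarrow> real^'m) \<Rightarrow> nat \<Rightarrow> 'p set \<Rightarrow> real^'n \<Rightarrow> real \<Rightarrow> bool" where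
  "lp_minimizer C A B l y u t \<Gamma> x \<delta> \<longleftrightarrow>
     lp_feasible C A B l y u t \<Gamma> x \<delta> \<and>
     (\<forall>x' \<delta>'. lp_feasible C A B l y u t \<Gamma> x' \<delta>' \<longrightarrow> \<delta> \<le> \<delta>')"

definition xd_prop :: "real^'n^'n \<Rightarrow> real^'m^'n \<Rightarrow> nat \<Rightarrow> (nat \<Rightarrow> real^'m) \<Rightarrow> nat \<Rightarrow>
    real^'n \<Rightarrow> real^'n" where
  "xd_prop A B l u t x0 = mpow A l *v x0 + (\<Sum>k=1..l. mpow A (k - 1) *v (B *v u (t - k)))"

definition Delta :: "real^'n^'r \<Rightarrow> real^'n^'n \<Rightarrow> real \<Rightarrow> nat \<Rightarrow> real \<Rightarrow> real \<Rightarrow> real \<Rightarrow> real" where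
  "Delta H A \<gamma> l dmax dlow m =
     mat_infnorm (H ** (A - (1 - \<gamma>) *\<^sub>R mat 1)) * mat_infnorm A ^ l * (dmax + dlow) / m"

definition qp_constraint :: "real^'n^'r \<Rightarrow> real^'r \<Rightarrow> real^'n^'n \<Rightarrow> real^'m^'n \<Rightarrow> real \<Rightarrow>
    real^'n \<Rightarrow> real \<Rightarrow> real^'m \<Rightarrow> bool" where
  "qp_constraint H q A B \<gamma> xd \<Delta> v \<longleftrightarrow>
     (\<forall>k. 0 \<le> (H *v (B *v v) + H *v ((A - (1 - \<gamma>) *\<^sub>R mat 1) *v xd) + \<gamma> *\<^sub>R q) $ k - \<Delta>)"

definition safe_set :: "real^'n^'r \<Rightarrow> real^'r \<Rightarrow> (real^'n) set" where
  "safe_set H q = {x. \<forall>k. 0 \<le> (H *v x + q) $ k}"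

end

theory Submission
  imports Defs
begin


lemma mpow_mult: "mpow A (Suc j) *v v = A *v (mpow A j *v v)"
  by (simp add: matrix_vector_mul_assoc)

lemma traj:
  assumes dyn: "\<And>t. x (Suc t) = A *v x t + B *v u t"
  shows "x (s + j) = mpow A j *v x s + (\<Sum>k<j. mpow A (j - k - 1) *v (B *v u (s + k)))"
proof (induction j)
  case 0 then show ?case by (simp add: matrix_vector_mul_lid)
next
  case (Suc j)
  have "x (s + Suc j) = A *v x (s + j) + B *v u (s + j)" using dyn by simp
  also have "\<dots> = mpow A (Suc j) *v x s + (\<Sum>k<j. A *v (mpow A (j - k - 1) *v (B *v u (s + k)))) + B *v u (s + j)"
    using Suc by (simp add: matrix_vector_right_distrib vec.sum matrix_vector_mul_assoc)
  also have "(\<Sum>k<j. A *v (mpow A (j - k - 1) *v (B *v u (s + k)))) = (\<Sum>k<j. mpow A (Suc j - k - 1) *v (B *v u (s + k)))"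
  proof (rule sum.cong)
    fix k assume "k \<in> {..<j}"
    then have "Suc j - k - 1 = Suc (j - k - 1)" by auto
    then show "A *v (mpow A (j - k - 1) *v (B *v u (s + k))) = mpow A (Suc j - k - 1) *v (B *v u (s + k))"
      by (simp add: matrix_vector_mul_assoc matrix_mul_assoc)
  qed simp
  finally show ?case by (simp add: matrix_vector_mul_lid add.assoc)
qed

lemma reidx: "(\<Sum>k=1..(j::nat). f k) = (\<Sum>k<j. f (j - k)::'a::comm_monoid_add)"
  by (rule sum.reindex_bij_witness[of _ "\<lambda>k. j - k" "\<lambda>k. j - k"]) (auto simp: diff_diff_cancel)

lemma traj2:
  assumes dyn: "\<And>t. x (Suc t) = A *v x t + B *v u t" and "l \<le> t"
  shows "x t = mpow A l *v x (t - l) + (\<Sum>k=1..l. mpow A (k - 1) *v (B *v u (t - k)))"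
proof -
  have "x t = x ((t - l) + l)" using assms by simp
  also have "\<dots> = mpow A l *v x (t - l) + (\<Sum>k<l. mpow A (l - k - 1) *v (B *v u (t - l + k)))"
    by (rule traj[of x A B u]) (fact dyn)
  also have "(\<Sum>k<l. mpow A (l - k - 1) *v (B *v u (t - l + k))) = (\<Sum>k<l. mpow A (l - k - 1) *v (B *v u (t - (l - k))))"
    by (rule sum.cong) (use assms in auto)
  also have "\<dots> = (\<Sum>k=1..l. mpow A (k - 1) *v (B *v u (t - k)))"
    by (subst reidx) simp
  finally show ?thesis .
qed

lemma obs_entry_diff: "obs_entry C A i j (a - b) = obs_entry C A i j a - obs_entry C A i j b"
  by (simp add: obs_entry_def matrix_vector_mult_diff_distrib inner_diff_right)

lemma obs_entry_scale: "obs_entry C A i j (r *\<^sub>R a) = r * obs_entry C A i j a"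
  by (simp add: obs_entry_def matrix_scaleR_vector_ac scaleR_matrix_vector_assoc[symmetric])

lemma exists_infnorm1: "\<exists>x::real^'n. infnorm x = 1"
proof -
  obtain i :: 'n where True by simp
  let ?v = "axis i (1::real)"
  have "?v \<noteq> 0" by (simp add: axis_eq_0_iff)
  then have "infnorm ?v \<noteq> 0" by (simp add: infnorm_eq_0)
  then have "infnorm ((1 / infnorm ?v) *\<^sub>R ?v) = 1" by (simp add: infnorm_mul infnorm_pos_le)
  then show ?thesis by blast
qed

lemma mat_bdd: "bdd_above {infnorm ((M::real^'a^'b) *v x) | x. infnorm x = 1}"
proof -
  have bl: "bounded_linear ((*v) M)" by (simp add: matrix_vector_mul_bounded_linear)
  obtain K where K: "\<And>x. norm (M *v x) \<le> norm x * K" using bounded_linear.bounded[OF bl] by blast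
  have b: "infnorm (M *v x) \<le> sqrt (real DIM(real^'a)) * K" if "infnorm x = 1" for x
  proof -
    have "norm x \<le> sqrt (real DIM(real^'a))" using norm_le_infnorm[of x] that by simp
    moreover have "K \<ge> 0" using K[of "axis undefined 1"] by (smt (verit, ccfv_SIG) axis_eq_0_iff norm_ge_zero norm_le_zero_iff zero_le_mult_iff)
    ultimately have "norm (M *v x) \<le> sqrt (real DIM(real^'a)) * K"
      using K[of x] by (smt (verit) mult_right_mono)
    then show ?thesis using infnorm_le_norm[of "M *v x"] by linarith
  qed
  show ?thesis by (rule bdd_aboveI[where M="sqrt (real DIM(real^'a)) * K"]) (use b in blast)
qed

lemma mat_infnorm_nonneg: "0 \<le> mat_infnorm (M::real^'a^'b)"
proof -
  obtain x :: "real^'a" where "infnorm x = 1" using exists_infnorm1 by blast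
  then have "infnorm (M *v x) \<le> mat_infnorm M" unfolding mat_infnorm_def
    by (intro cSup_upper[OF _ mat_bdd]) blast
  then show ?thesis using infnorm_pos_le[of "M *v x"] by linarith
qed

lemma mat_infnorm_bound: "infnorm ((M::real^'a^'b) *v v) \<le> mat_infnorm M * infnorm v"
proof (cases "v = 0")
  case True then show ?thesis by (simp add: infnorm_0)
next
  case False
  then have p: "infnorm v > 0" using infnorm_pos_lt by blast
  let ?w = "(1 / infnorm v) *\<^sub>R v"
  have "infnorm ?w = 1" using p by (simp add: infnorm_mul)
  then have "infnorm (M *v ?w) \<le> mat_infnorm M" unfolding mat_infnorm_def
    by (intro cSup_upper[OF _ mat_bdd]) blast
  moreover have "infnorm (M *v ?w) = infnorm (M *v v) / infnorm v"
    using p by (simp add: matrix_scaleR_vector_ac scaleR_matrix_vector_assoc[symmetric] infnorm_mul)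
  ultimately show ?thesis using p by (simp add: divide_le_eq mult.commute)
qed

lemma mpow_bound: "infnorm (mpow A l *v v) \<le> mat_infnorm A ^ l * infnorm v"
proof (induction l)
  case 0 then show ?case by (simp add: matrix_vector_mul_lid)
next
  case (Suc l)
  have "infnorm (mpow A (Suc l) *v v) \<le> mat_infnorm A * infnorm (mpow A l *v v)"
    by (simp add: matrix_vector_mul_assoc[symmetric] mat_infnorm_bound)
  also have "\<dots> \<le> mat_infnorm A * (mat_infnorm A ^ l * infnorm v)"
    using Suc mat_infnorm_nonneg by (intro mult_left_mono) auto
  finally show ?case by simp
qed


lemma obs_set_eq: "{\<bar>obs_entry C A i j a\<bar> | i j. i \<in> \<Gamma> \<and> j \<le> l}
   = (\<lambda>(i,j). \<bar>obs_entry C A i j a\<bar>) ` (\<Gamma> \<times> {..l})"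
  by auto

lemma obs_infnorm_ge:
  assumes "i \<in> \<Gamma>" "j \<le> l"
  shows "\<bar>obs_entry C A i j a\<bar> \<le> obs_infnorm C A l \<Gamma> a"
  unfolding obs_infnorm_def obs_set_eq
  by (rule Max_ge) (use assms in auto)

lemma obs_infnorm_le:
  assumes "\<Gamma> \<noteq> {}" "\<And>i j. i \<in> \<Gamma> \<Longrightarrow> j \<le> l \<Longrightarrow> \<bar>obs_entry C A i j a\<bar> \<le> D"
  shows "obs_infnorm C A l \<Gamma> a \<le> D"
  unfolding obs_infnorm_def obs_set_eq
  using assms by (subst Max_le_iff) auto

lemma cont_obs: "continuous_on UNIV (obs_entry C A i j)"
proof -
  have "obs_entry C A i j = (\<lambda>a. row i C \<bullet> (mpow A j *v a))"
    by (rule ext) (simp add: obs_entry_def)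
  moreover have "continuous_on UNIV (\<lambda>a. mpow A j *v a)"
    using linear_continuous_on_compose[OF continuous_on_id, of "(*v) (mpow A j)"]
    by (simp add: matrix_vector_mul_linear)
  ultimately show ?thesis using continuous_on_inner[OF continuous_on_const, of UNIV _ "row i C"] by simp
qed

lemma obs_m_props:
  fixes C :: "real^'n^'p" and A :: "real^'n^'n"
  assumes rk: "obs_full_rank C A l \<Gamma>" and ne: "\<Gamma> \<noteq> {}"
  shows "obs_m C A l \<Gamma> > 0"
    and "\<And>a D. (\<And>i j. i \<in> \<Gamma> \<Longrightarrow> j \<le> l \<Longrightarrow> \<bar>obs_entry C A i j a\<bar> \<le> D) \<Longrightarrow>
            obs_m C A l \<Gamma> * infnorm a \<le> D"
proof -
  define IJ where "IJ = \<Gamma> \<times> {..l}"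
  have fIJ: "finite IJ" unfolding IJ_def by simp
  have neIJ: "IJ \<noteq> {}" unfolding IJ_def using ne by auto
  define g where "g a = (\<Sum>(i,j)\<in>IJ. \<bar>obs_entry C A i j a\<bar>)" for a
  define S where "S = {obs_infnorm C A l \<Gamma> a | a. infnorm a = 1}"
  have ca: "continuous_on UNIV (\<lambda>a. \<bar>obs_entry C A i j a\<bar>)" for i j
    by (rule continuous_on_rabs[OF cont_obs])
  have cg: "continuous_on UNIV g" unfolding g_def case_prod_beta
    by (rule continuous_on_sum) (use ca in blast)
  have gscale: "g (r *\<^sub>R a) = \<bar>r\<bar> * g a" for r a
    unfolding g_def by (simp add: obs_entry_scale abs_mult sum_distrib_left case_prod_beta)
  have gnn: "0 \<le> g a" for a
    unfolding g_def by (rule sum_nonneg) (simp add: case_prod_beta)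
  have gpos: "g a > 0" if "a \<noteq> 0" for a
  proof -
    have "\<not> (\<forall>i\<in>\<Gamma>. \<forall>j\<le>l. obs_entry C A i j a = 0)"
      using rk that unfolding obs_full_rank_def by metis
    then obtain i j where ij: "i \<in> \<Gamma>" "j \<le> l" "obs_entry C A i j a \<noteq> 0"
      by auto
    have mem: "(i,j) \<in> IJ" unfolding IJ_def using ij by simp
    have "(\<lambda>(i,j). \<bar>obs_entry C A i j a\<bar>) (i,j) \<le> (\<Sum>(i,j)\<in>IJ. \<bar>obs_entry C A i j a\<bar>)"
      by (rule member_le_sum[OF mem _ fIJ]) (simp add: case_prod_beta)
    then have "\<bar>obs_entry C A i j a\<bar> \<le> g a" unfolding g_def by simp
    then show ?thesis using ij(3) by linarith
  qed
  have "sphere (0::real^'n) 1 \<noteq> {}" by simp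
  then obtain a0 where a0: "a0 \<in> sphere 0 1" "\<And>b. b \<in> sphere 0 1 \<Longrightarrow> g a0 \<le> g b"
    using continuous_attains_inf[OF compact_sphere _ continuous_on_subset[OF cg]] by blast
  define c where "c = g a0"
  have "a0 \<noteq> 0" using a0(1) by auto
  then have cpos: "c > 0" unfolding c_def by (rule gpos)
  have gge: "c * infnorm a \<le> g a" for a
  proof (cases "a = 0")
    case True then show ?thesis using gnn[of a] by (simp add: infnorm_0)
  next
    case False
    then have np: "norm a > 0" by simp
    have "(1 / norm a) *\<^sub>R a \<in> sphere 0 1" using np by simp
    then have "c \<le> g ((1 / norm a) *\<^sub>R a)" using a0 c_def by blast
    also have "\<dots> = g a / norm a" using np by (simp add: gscale)
    finally have "c * norm a \<le> g a" using np by (simp add: le_divide_eq)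
    moreover have "c * infnorm a \<le> c * norm a" using cpos infnorm_le_norm by simp
    ultimately show ?thesis by linarith
  qed
  have gle: "g a \<le> real (card IJ) * obs_infnorm C A l \<Gamma> a" for a
  proof -
    have "g a \<le> (\<Sum>_\<in>IJ. obs_infnorm C A l \<Gamma> a)" unfolding g_def
      by (rule sum_mono) (auto simp: IJ_def intro: obs_infnorm_ge)
    then show ?thesis by simp
  qed
  have cardpos: "real (card IJ) > 0" using fIJ neIJ by (simp add: card_gt_0_iff)
  have Sne: "S \<noteq> {}" unfolding S_def using exists_infnorm1[where 'n='n] by auto
  have Slow: "c / real (card IJ) \<le> z" if "z \<in> S" for z
  proof -
    from that obtain b where b: "infnorm b = 1" "z = obs_infnorm C A l \<Gamma> b" unfolding S_def by blast
    have "c \<le> real (card IJ) * z" using gge[of b] gle[of b] b by simp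
    then show ?thesis using cardpos by (simp add: divide_le_eq mult.commute)
  qed
  have mge: "c / real (card IJ) \<le> obs_m C A l \<Gamma>"
    unfolding obs_m_def S_def[symmetric] by (rule cInf_greatest[OF Sne Slow])
  show mpos: "obs_m C A l \<Gamma> > 0"
  proof -
    have "c / real (card IJ) > 0" using cpos cardpos by simp
    then show ?thesis using mge by linarith
  qed
  have bddS: "bdd_below S"
  proof (rule bdd_belowI[where m=0])
    fix z assume "z \<in> S"
    then have "c / real (card IJ) \<le> z" by (rule Slow)
    moreover have "c / real (card IJ) > 0" using cpos cardpos by simp
    ultimately show "0 \<le> z" by linarith
  qed
  fix a D
  assume hD: "\<And>i j. i \<in> \<Gamma> \<Longrightarrow> j \<le> l \<Longrightarrow> \<bar>obs_entry C A i j a\<bar> \<le> D"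
  obtain i0 where "i0 \<in> \<Gamma>" using ne by blast
  then have D0: "0 \<le> D" using hD[of i0 0] by linarith
  show "obs_m C A l \<Gamma> * infnorm a \<le> D"
  proof (cases "a = 0")
    case True then show ?thesis using D0 by (simp add: infnorm_0)
  next
    case False
    then have p: "infnorm a > 0" using infnorm_pos_lt by blast
    let ?b = "(1 / infnorm a) *\<^sub>R a"
    have "infnorm ?b = 1" using p by (simp add: infnorm_mul)
    then have "obs_infnorm C A l \<Gamma> ?b \<in> S" unfolding S_def by blast
    then have "obs_m C A l \<Gamma> \<le> obs_infnorm C A l \<Gamma> ?b"
      unfolding obs_m_def S_def[symmetric] by (rule cInf_lower[OF _ bddS])
    also have "obs_infnorm C A l \<Gamma> ?b \<le> D / infnorm a"
    proof (rule obs_infnorm_le[OF ne])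
      fix i j assume "i \<in> \<Gamma>" "j \<le> l"
      then show "\<bar>obs_entry C A i j ?b\<bar> \<le> D / infnorm a"
        using hD[of i j] p by (simp add: obs_entry_scale abs_mult divide_right_mono)
    qed
    finally show ?thesis using p by (simp add: le_divide_eq)
  qed
qed


theorem theorem1:
  fixes A :: "real^'n^'n" and B :: "real^'m^'n" and C :: "real^'n^'p"
    and H :: "real^'n^'r" and q :: "real^'r"
    and x :: "nat \<Rightarrow> real^'n" and u unom :: "nat \<Rightarrow> real^'m"
    and y e d :: "nat \<Rightarrow> real^'p"
    and dmax \<gamma> :: real and s l :: nat
    and xh :: "nat \<Rightarrow> 'p set \<Rightarrow> real^'n" and dl :: "nat \<Rightarrow> 'p set \<Rightarrow> real"
  assumes dyn: "\<And>t. x (Suc t) = A *v x t + B *v u t"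
    and meas: "\<And>t. y t = C *v x t + e t + d t"
    and noise: "\<And>t. infnorm (d t) \<le> dmax"
    and attack: "\<exists>K. card K \<le> s \<and> (\<forall>t. \<forall>i. i \<notin> K \<longrightarrow> e t $ i = 0)"
    and rank: "\<And>\<Gamma>. card \<Gamma> = CARD('p) - s \<Longrightarrow> obs_full_rank C A l \<Gamma>"
    and window: "l + 1 \<ge> CARD('n)"
    and gam: "0 < \<gamma>" "\<gamma> < 1"
    and lp: "\<And>t \<Gamma>. l \<le> t \<Longrightarrow> card \<Gamma> = CARD('p) - s \<Longrightarrow>
               lp_minimizer C A B l y u t \<Gamma> (xh t \<Gamma>) (dl t \<Gamma>)"
    and feasible: "\<And>t. l \<le> t \<Longrightarrow> \<exists>v.
               \<forall>\<Gamma>. card \<Gamma> = CARD('p) - s \<and> dl t \<Gamma> \<le> dmax \<longrightarrow>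
                 qp_constraint H q A B \<gamma> (xd_prop A B l u t (xh t \<Gamma>))
                   (Delta H A \<gamma> l dmax (dl t \<Gamma>) (obs_m C A l \<Gamma>)) v"
    and qp: "\<And>t. l \<le> t \<Longrightarrow>
               (\<forall>\<Gamma>. card \<Gamma> = CARD('p) - s \<and> dl t \<Gamma> \<le> dmax \<longrightarrow>
                 qp_constraint H q A B \<gamma> (xd_prop A B l u t (xh t \<Gamma>))
                   (Delta H A \<gamma> l dmax (dl t \<Gamma>) (obs_m C A l \<Gamma>)) (u t)) \<and>
               (\<forall>v. (\<forall>\<Gamma>. card \<Gamma> = CARD('p) - s \<and> dl t \<Gamma> \<le> dmax \<longrightarrow>
                 qp_constraint H q A B \<gamma> (xd_prop A B l u t (xh t \<Gamma>))
                   (Delta H A \<gamma> l dmax (dl t \<Gamma>) (obs_m C A l \<Gamma>)) v) \<longrightarrow>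
                 (norm (u t - unom t))\<^sup>2 \<le> (norm (v - unom t))\<^sup>2)"
    and init: "x l \<in> safe_set H q"
  shows "\<forall>t\<ge>l. x t \<in> safe_set H q"
  proof -
  obtain K where K: "card K \<le> s" "\<And>t i. i \<notin> K \<Longrightarrow> e t $ i = 0" using attack by blast
  have "card (UNIV - K) = CARD('p) - card K" by (simp add: card_Diff_subset)
  then have "CARD('p) - s \<le> card (UNIV - K)" using K(1) by simp
  then obtain \<Gamma> where G: "\<Gamma> \<subseteq> UNIV - K" "card \<Gamma> = CARD('p) - s"
    by (rule obtain_subset_with_card_n)
  have rkG: "obs_full_rank C A l \<Gamma>" using rank G(2) .
  have neG: "\<Gamma> \<noteq> {}"
  proof
    assume "\<Gamma> = {}"
    then have "\<forall>a::real^'n. a = 0" using rkG unfolding obs_full_rank_def by simp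
    moreover obtain i :: 'n where True by simp
    ultimately have "axis i (1::real) = 0" by blast
    then show False by (simp add: axis_eq_0_iff)
  qed
  note mp = obs_m_props[OF rkG neG]
  define Mg where "Mg = A - (1 - \<gamma>) *\<^sub>R mat 1"
  have Mgv: "Mg *v z = A *v z - (1 - \<gamma>) *\<^sub>R z" for z
    unfolding Mg_def by (simp add: matrix_vector_mult_diff_rdistrib scaleR_matrix_vector_assoc[symmetric])
  have rowC: "row i C = C $ i" for i by (simp add: row_def vec_eq_iff)
  have step: "x (Suc t) \<in> safe_set H q" if tl: "l \<le> t" and xs: "x t \<in> safe_set H q" for t
  proof -
    define s0 where "s0 = t - l"
    define xhat where "xhat = xh t \<Gamma>"
    define \<delta> where "\<delta> = dl t \<Gamma>"
    have lpm: "lp_minimizer C A B l y u t \<Gamma> xhat \<delta>" unfolding xhat_def \<delta>_def by (rule lp[OF tl G(2)])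
    have Yeq: "obs_entry C A i j (x s0) - Yval C A B l y u t i j = - d (s0 + j) $ i"
      if "i \<in> \<Gamma>" "j \<le> l" for i j
    proof -
      have ei: "e (s0 + j) $ i = 0" using K(2) G(1) that(1) by blast
      have "t - l + j = s0 + j" unfolding s0_def by simp
      then have "Yval C A B l y u t i j = y (s0 + j) $ i - (\<Sum>k<j. row i C \<bullet> (mpow A (j - k - 1) *v (B *v u (s0 + k))))"
        unfolding Yval_def s0_def by simp
      also have "y (s0 + j) $ i = row i C \<bullet> x (s0 + j) + d (s0 + j) $ i"
        using meas[of "s0 + j"] ei by (simp add: matrix_vector_mul_component rowC)
      also have "x (s0 + j) = mpow A j *v x s0 + (\<Sum>k<j. mpow A (j - k - 1) *v (B *v u (s0 + k)))"
        by (rule traj[of x A B u]) (fact dyn)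
      finally show ?thesis by (simp add: obs_entry_def inner_add_right inner_sum_right)
    qed
    have feas: "lp_feasible C A B l y u t \<Gamma> (x s0) dmax"
      unfolding lp_feasible_def
    proof (intro ballI allI impI conjI)
      fix i j assume ij: "i \<in> \<Gamma>" "j \<le> l"
      have "\<bar>d (s0 + j) $ i\<bar> \<le> dmax" using component_le_infnorm_cart[of "d (s0 + j)" i] noise[of "s0 + j"] by linarith
      then show "- dmax \<le> obs_entry C A i j (x s0) - Yval C A B l y u t i j"
        "obs_entry C A i j (x s0) - Yval C A B l y u t i j \<le> dmax" using Yeq[OF ij] by auto
    qed
    have dle: "\<delta> \<le> dmax" using lpm feas unfolding lp_minimizer_def by blast
    have ebound: "\<bar>obs_entry C A i j (xhat - x s0)\<bar> \<le> dmax + \<delta>" if ij: "i \<in> \<Gamma>" "j \<le> l" for i j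
    proof -
      have "\<bar>d (s0 + j) $ i\<bar> \<le> dmax" using component_le_infnorm_cart[of "d (s0 + j)" i] noise[of "s0 + j"] by linarith
      moreover have "- \<delta> \<le> obs_entry C A i j xhat - Yval C A B l y u t i j"
        "obs_entry C A i j xhat - Yval C A B l y u t i j \<le> \<delta>"
        using lpm ij unfolding lp_minimizer_def lp_feasible_def by auto
      ultimately show ?thesis using Yeq[OF ij] by (simp add: obs_entry_diff abs_le_iff)
    qed
    define m where "m = obs_m C A l \<Gamma>"
    have mpos: "m > 0" unfolding m_def by (rule mp(1))
    have "m * infnorm (xhat - x s0) \<le> dmax + \<delta>" unfolding m_def by (rule mp(2)) (rule ebound)
    then have eb: "infnorm (xhat - x s0) \<le> (dmax + \<delta>) / m" using mpos by (simp add: le_divide_eq mult.commute)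
    define xd where "xd = xd_prop A B l u t xhat"
    have xt: "x t = mpow A l *v x s0 + (\<Sum>k=1..l. mpow A (k - 1) *v (B *v u (t - k)))"
      unfolding s0_def by (rule traj2[of x A B u, OF dyn tl])
    have w: "x t - xd = mpow A l *v (x s0 - xhat)"
      unfolding xd_def xd_prop_def xt by (simp add: matrix_vector_mult_diff_distrib)
    have wb: "infnorm (x t - xd) \<le> mat_infnorm A ^ l * ((dmax + \<delta>) / m)"
    proof -
      have "infnorm (x t - xd) \<le> mat_infnorm A ^ l * infnorm (x s0 - xhat)" unfolding w by (rule mpow_bound)
      also have "\<dots> \<le> mat_infnorm A ^ l * ((dmax + \<delta>) / m)"
        using eb infnorm_sub[of "x s0" xhat] mat_infnorm_nonneg[of A]
        by (intro mult_left_mono) auto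
      finally show ?thesis .
    qed
    define Dl where "Dl = Delta H A \<gamma> l dmax \<delta> m"
    have Dleq: "Dl = mat_infnorm (H ** Mg) * (mat_infnorm A ^ l * ((dmax + \<delta>) / m))"
      unfolding Dl_def Delta_def Mg_def by simp
    have errb: "\<bar>(H *v (Mg *v (x t - xd))) $ k\<bar> \<le> Dl" for k
    proof -
      have "\<bar>(H *v (Mg *v (x t - xd))) $ k\<bar> \<le> infnorm ((H ** Mg) *v (x t - xd))"
        using component_le_infnorm_cart by (simp add: matrix_vector_mul_assoc)
      also have "\<dots> \<le> mat_infnorm (H ** Mg) * infnorm (x t - xd)" by (rule mat_infnorm_bound)
      also have "\<dots> \<le> Dl" unfolding Dleq
        using wb mat_infnorm_nonneg[of "H ** Mg"] by (intro mult_left_mono) auto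
      finally show ?thesis .
    qed
    have qc: "qp_constraint H q A B \<gamma> xd Dl (u t)"
      using conjunct1[OF qp[OF tl]] G(2) dle unfolding xd_def Dl_def m_def xhat_def \<delta>_def by blast
    have ident: "H *v x (Suc t) + q = (H *v (B *v u t) + H *v (Mg *v xd) + \<gamma> *\<^sub>R q)
        + H *v (Mg *v (x t - xd)) + (1 - \<gamma>) *\<^sub>R (H *v x t + q)"
      unfolding dyn Mgv
      by (simp add: matrix_vector_right_distrib matrix_vector_mult_diff_distrib
          matrix_scaleR_vector_ac scaleR_matrix_vector_assoc[symmetric] algebra_simps)
    show ?thesis unfolding safe_set_def
    proof (intro CollectI allI)
      fix k
      have c1: "0 \<le> (H *v (B *v u t) + H *v (Mg *v xd) + \<gamma> *\<^sub>R q) $ k - Dl"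
        using qc unfolding qp_constraint_def Mg_def by blast
      have c2: "0 \<le> (H *v x t + q) $ k" using xs unfolding safe_set_def by blast
      have c3: "0 \<le> (1 - \<gamma>) * (H *v x t + q) $ k" using c2 gam by simp
      have "(H *v x (Suc t) + q) $ k = (H *v (B *v u t) + H *v (Mg *v xd) + \<gamma> *\<^sub>R q) $ k
          + (H *v (Mg *v (x t - xd))) $ k + (1 - \<gamma>) * (H *v x t + q) $ k"
        unfolding ident by simp
      then show "0 \<le> (H *v x (Suc t) + q) $ k" using c1 c3 errb[of k] by (smt (verit))
    qed
  qed
  show ?thesis
  proof (intro allI impI)
    fix t assume "l \<le> t"
    then show "x t \<in> safe_set H q"
    proof (induction t rule: nat_induct_at_least)
      case base then show ?case by (rule init)
    next
      case (Suc n) then show ?case using step by blast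
    qed
  qed
qed

end
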